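(* Let $A\subseteq Q_n$ be an extremal set for which there exist $t\in Q_n$ and an integer $r$ such that $B(t,r)\subseteq A\subseteq B(t,r+1)$. Then $A$ is isomorphic to an initial segment of the simplicial order.
   Context: $Q_n$ is the hypercube with vertex set the power set of $[n]=\{1,\dots,n\}$ and metric $d(x,y)=|x\Delta y|$; $B(x,\rho)=\{y: d(x,y)\le\rho\}$. For $A\subseteq Q_n$ and $t>0$, $N^t(A)=\{x:\min_{y\in A}d(x,y)\le t\}$; $N^t(A)$ is minimal if $|N^t(A)|\le|N^t(B)|$ for all $B$ with $|B|=|A|$. $A$ is extremal if $N^t(A)$ and $N^t(Q_n\setminus A)$ are minimal for all integers $t>0$. The lexicographic order on $r$-subsets: $A<_{lex}B$ iff $\min(A\Delta B)\in A$. The simplicial order on $Q_n$: $A<_{sim}B$ iff $|A|<|B|$, or $|A|=|B|$ and $A<_{lex}B$. Two subsets of $Q_n$ are isomorphic if one is the image of the other under an automorphism of $Q_n$ (a map $x\mapsto\sigma(x)\Delta I$ with $\sigma$ a permutation of $[n]$ and $I\subseteq[n]$). *)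

theory Defs
  imports "HOL-Combinatorics.Permutations"
begin

definition cube :: "nat \<Rightarrow> nat set set" where
  "cube n = Pow {1..n}"

definition symdiff :: "nat set \<Rightarrow> nat set \<Rightarrow> nat set" where
  "symdiff x y = (x - y) \<union> (y - x)"

definition hdist :: "nat set \<Rightarrow> nat set \<Rightarrow> nat" where
  "hdist x y = card (symdiff x y)"

definition hball :: "nat \<Rightarrow> nat set \<Rightarrow> int \<Rightarrow> nat set set" where
  "hball n x \<rho> = {y \<in> cube n. int (hdist x y) \<le> \<rho>}"

definition nbhd :: "nat \<Rightarrow> nat \<Rightarrow> nat set set \<Rightarrow> nat set set" where
  "nbhd n t A = {x \<in> cube n. \<exists>y\<in>A. hdist x y \<le> t}"

definition nbhd_minimal :: "nat \<Rightarrow> nat \<Rightarrow> nat set set \<Rightarrow> bool" where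
  "nbhd_minimal n t A =
     (\<forall>B. B \<subseteq> cube n \<longrightarrow> card B = card A \<longrightarrow> card (nbhd n t A) \<le> card (nbhd n t B))"

definition extremal :: "nat \<Rightarrow> nat set set \<Rightarrow> bool" where
  "extremal n A = (A \<subseteq> cube n \<and>
     (\<forall>t::nat. t > 0 \<longrightarrow> nbhd_minimal n t A \<and> nbhd_minimal n t (cube n - A)))"

definition lex_less :: "nat set \<Rightarrow> nat set \<Rightarrow> bool" where
  "lex_less A B = (A \<noteq> B \<and> Min (symdiff A B) \<in> A)"

definition sim_less :: "nat set \<Rightarrow> nat set \<Rightarrow> bool" where
  "sim_less A B = (card A < card B \<or> (card A = card B \<and> lex_less A B))"

definition sim_initial_segment :: "nat \<Rightarrow> nat set set \<Rightarrow> bool" where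
  "sim_initial_segment n S =
     (S \<subseteq> cube n \<and> (\<forall>x\<in>S. \<forall>y\<in>cube n. sim_less y x \<longrightarrow> y \<in> S))"

definition cube_aut :: "nat \<Rightarrow> (nat set \<Rightarrow> nat set) \<Rightarrow> bool" where
  "cube_aut n f = (\<exists>\<sigma> I. \<sigma> permutes {1..n} \<and> I \<subseteq> {1..n} \<and>
                      (\<forall>x. f x = symdiff (\<sigma> ` x) I))"

definition cube_isomorphic :: "nat \<Rightarrow> nat set set \<Rightarrow> nat set set \<Rightarrow> bool" where
  "cube_isomorphic n A B = (\<exists>f. cube_aut n f \<and> f ` A = B)"

end

theory Submission
  imports Defs
begin

definition layer :: "nat \<Rightarrow> nat set \<Rightarrow> nat set set" where
  "layer k X = {x. x \<subseteq> X \<and> card x = k}"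
definition upsh :: "nat set \<Rightarrow> nat \<Rightarrow> nat set set \<Rightarrow> nat set set" where
  "upsh X j F = {y. y \<subseteq> X \<and> card y = j \<and> (\<exists>x\<in>F. x \<subseteq> y)}"
definition downsh :: "nat \<Rightarrow> nat set set \<Rightarrow> nat set set" where
  "downsh j F = {y. card y = j \<and> (\<exists>x\<in>F. y \<subseteq> x)}"
definition Cup :: "nat set \<Rightarrow> nat \<Rightarrow> nat set set \<Rightarrow> bool" where
  "Cup X k L = (\<forall>j L'. L' \<subseteq> layer k X \<longrightarrow> card L' = card L \<longrightarrow> card (upsh X j L) \<le> card (upsh X j L'))"
definition Cdown :: "nat set \<Rightarrow> nat \<Rightarrow> nat set set \<Rightarrow> bool" where
  "Cdown X k M = (\<forall>j N. N \<subseteq> layer k X \<longrightarrow> card N = card M \<longrightarrow> card (downsh j M) \<le> card (downsh j N))"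
definition lexdc :: "nat set \<Rightarrow> nat \<Rightarrow> nat set set \<Rightarrow> bool" where
  "lexdc Y k F = (F \<subseteq> layer k Y \<and> (\<forall>x\<in>F. \<forall>y\<in>layer k Y. lex_less y x \<longrightarrow> y \<in> F))"

lemma ext_subset:
  assumes "finite B" "A \<subseteq> B" "card A \<le> k" "k \<le> card B"
  shows "\<exists>C. A \<subseteq> C \<and> C \<subseteq> B \<and> card C = k"
proof -
  have fA: "finite A" using assms finite_subset by blast
  have "card (B - A) = card B - card A" using assms fA card_Diff_subset by blast
  then have "k - card A \<le> card (B - A)" using assms by linarith
  then obtain D where D: "D \<subseteq> B - A" "card D = k - card A" "finite D"
    by (metis obtain_subset_with_card_n)
  have "card (A \<union> D) = card A + card D" using D fA by (subst card_Un_disjoint) auto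
  then show ?thesis using D assms by (intro exI[of _ "A \<union> D"]) auto
qed

lemma finite_layer: "finite X \<Longrightarrow> finite (layer k X)"
  unfolding layer_def by (rule finite_subset[of _ "Pow X"]) auto

lemma finite_upsh: "finite X \<Longrightarrow> finite (upsh X j F)"
  unfolding upsh_def by (rule finite_subset[of _ "Pow X"]) auto

lemma finite_downsh: "finite X \<Longrightarrow> F \<subseteq> Pow X \<Longrightarrow> finite (downsh j F)"
  unfolding downsh_def by (rule finite_subset[of _ "Pow X"]) auto

lemma symdiff_Min:
  assumes "finite Y" "a = Min Y" "symdiff y x \<subseteq> Y" "a \<in> symdiff y x"
  shows "Min (symdiff y x) = a"
proof -
  have "finite (symdiff y x)" using assms finite_subset by blast
  moreover have "\<forall>z\<in>symdiff y x. a \<le> z" using assms by auto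
  ultimately show ?thesis using assms(4) by (metis Min_eqI)
qed

lemma lexdc_ins:
  assumes fY: "finite Y" and a: "a = Min Y" "a \<in> Y" and k: "k \<ge> 1"
    and F: "lexdc (Y - {a}) (k - 1) F"
  shows "lexdc Y k (insert a ` F)"
  unfolding lexdc_def
proof safe
  show "insert a f \<in> layer k Y" if "f \<in> F" for f
  proof -
    have "f \<in> layer (k-1) (Y - {a})" using F that unfolding lexdc_def by blast
    then have "f \<subseteq> Y - {a}" "card f = k - 1" unfolding layer_def by auto
    moreover have "finite f" using \<open>f \<subseteq> Y - {a}\<close> fY finite_subset by blast
    moreover have "a \<notin> f" using \<open>f \<subseteq> Y - {a}\<close> by blast
    ultimately show ?thesis using a k unfolding layer_def by auto
  qed
next
  fix f y assume fF: "f \<in> F" and yl: "y \<in> layer k Y" and lt: "lex_less y (insert a f)"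
  have fl: "f \<in> layer (k-1) (Y - {a})" using F fF unfolding lexdc_def by blast
  then have fs: "f \<subseteq> Y - {a}" "card f = k - 1" unfolding layer_def by auto
  have ys: "y \<subseteq> Y" "card y = k" using yl unfolding layer_def by auto
  have ay: "a \<in> y"
  proof (rule ccontr)
    assume "a \<notin> y"
    then have "a \<in> symdiff y (insert a f)" unfolding symdiff_def by auto
    moreover have "symdiff y (insert a f) \<subseteq> Y" using fs ys a unfolding symdiff_def by auto
    ultimately have "Min (symdiff y (insert a f)) = a" using symdiff_Min fY a by blast
    then show False using lt \<open>a \<notin> y\<close> unfolding lex_less_def by auto
  qed
  have fy: "finite y" using ys fY finite_subset by blast
  have "y - {a} \<in> layer (k-1) (Y - {a})" using ys ay fy unfolding layer_def by auto
  moreover have "symdiff (y - {a}) f = symdiff y (insert a f)"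
    using fs ay unfolding symdiff_def by auto
  moreover have "y - {a} \<noteq> f" using lt ay unfolding lex_less_def by (metis insert_Diff)
  moreover have "a \<notin> symdiff y (insert a f)" using ay unfolding symdiff_def by auto
  moreover have "Min (symdiff y (insert a f)) \<in> y" using lt unfolding lex_less_def by auto
  moreover have "Min (symdiff y (insert a f)) \<in> symdiff y (insert a f)"
  proof (rule Min_in)
    show "finite (symdiff y (insert a f))" using fy fs fY finite_subset unfolding symdiff_def
      by (metis finite_Diff finite_Un finite_insert rev_finite_subset Diff_subset)
    show "symdiff y (insert a f) \<noteq> {}" using lt unfolding lex_less_def symdiff_def by auto
  qed
  ultimately have "lex_less (y - {a}) f" unfolding lex_less_def
    by (metis DiffI singletonD)
  then have "y - {a} \<in> F" using F fF \<open>y - {a} \<in> layer (k-1) (Y - {a})\<close> unfolding lexdc_def by blast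
  then show "y \<in> insert a ` F" using ay by (metis image_eqI insert_Diff)
qed

lemma lexdc_star:
  assumes fY: "finite Y" and a: "a = Min Y" "a \<in> Y"
    and F: "lexdc (Y - {a}) k F"
  shows "lexdc Y k ({x \<in> layer k Y. a \<in> x} \<union> F)"
  unfolding lexdc_def
proof safe
  show "x \<in> layer k Y" if "x \<in> F" for x using F that unfolding lexdc_def layer_def by auto
next
  fix x y assume xl: "x \<in> layer k Y" "a \<in> x" and yl: "y \<in> layer k Y" and lt: "lex_less y x"
    and ny: "y \<notin> F"
  show "a \<in> y"
  proof (rule ccontr)
    assume "a \<notin> y"
    then have "a \<in> symdiff y x" using xl unfolding symdiff_def by auto
    moreover have "symdiff y x \<subseteq> Y" using xl yl unfolding symdiff_def layer_def by auto
    ultimately have "Min (symdiff y x) = a" using symdiff_Min fY a by blast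
    then show False using lt \<open>a \<notin> y\<close> unfolding lex_less_def by auto
  qed
next
  fix x y assume xF: "x \<in> F" and yl: "y \<in> layer k Y" and lt: "lex_less y x"
    and ny: "y \<notin> F"
  show "a \<in> y"
  proof (rule ccontr)
    assume "a \<notin> y"
    then have "y \<in> layer k (Y - {a})" using yl unfolding layer_def by auto
    then show False using F xF lt ny unfolding lexdc_def by blast
  qed
qed



lemma bij_upd:
  assumes "bij_betw s X' Y'" "i \<notin> X'" "a \<notin> Y'"
  shows "bij_betw (s(i := a)) (insert i X') (insert a Y')"
proof -
  have "bij_betw s X' Y' = bij_betw (s(i := a)) X' Y'"
    using assms(2) by (intro bij_betw_cong) auto
  then have "bij_betw (s(i := a)) X' Y'" using assms(1) by simp
  then have "bij_betw (s(i := a)) (X' \<union> {i}) (Y' \<union> {(s(i := a)) i})"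
    using assms(2,3) by (intro notIn_Un_bij_betw) auto
  then show ?thesis by simp
qed

lemma bij_image_sets:
  assumes "bij_betw s X Y"
  shows "(\<lambda>x. s ` x) ` {x. x \<subseteq> X \<and> Q (s ` x)} = {y. y \<subseteq> Y \<and> Q y}"
proof
  show "(\<lambda>x. s ` x) ` {x. x \<subseteq> X \<and> Q (s ` x)} \<subseteq> {y. y \<subseteq> Y \<and> Q y}"
    using assms bij_betw_imp_surj_on by blast
next
  show "{y. y \<subseteq> Y \<and> Q y} \<subseteq> (\<lambda>x. s ` x) ` {x. x \<subseteq> X \<and> Q (s ` x)}"
  proof
    fix y assume y: "y \<in> {y. y \<subseteq> Y \<and> Q y}"
    let ?x = "inv_into X s ` y"
    have "?x \<subseteq> X" using y assms unfolding bij_betw_def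
      by (auto intro: inv_into_into)
    moreover have "s ` ?x = y"
    proof -
      have "\<forall>z\<in>y. s (inv_into X s z) = z" using y assms unfolding bij_betw_def
        by (auto intro: f_inv_into_f)
      then show ?thesis by (simp add: image_image)
    qed
    ultimately have "?x \<in> {x. x \<subseteq> X \<and> Q (s ` x)}" using y by auto
    then show "y \<in> (\<lambda>x. s ` x) ` {x. x \<subseteq> X \<and> Q (s ` x)}" using \<open>s ` ?x = y\<close> by blast
  qed
qed

lemma bij_card_sub: "bij_betw s X Y \<Longrightarrow> x \<subseteq> X \<Longrightarrow> card (s ` x) = card x"
  unfolding bij_betw_def by (metis card_image inj_on_subset)

lemma image_layer:
  assumes "bij_betw s X Y" "L \<subseteq> layer k X"
  shows "(\<lambda>x. s ` x) ` L \<subseteq> layer k Y"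
proof
  fix y assume "y \<in> (\<lambda>x. s ` x) ` L"
  then obtain x where x: "x \<in> L" "y = s ` x" by blast
  then have "x \<subseteq> X" "card x = k" using assms unfolding layer_def by auto
  then show "y \<in> layer k Y" using x bij_card_sub[OF assms(1)] bij_betw_imp_surj_on[OF assms(1)]
    unfolding layer_def by auto
qed

lemma lexdc_single:
  assumes "F \<subseteq> layer k Y" "layer k Y \<subseteq> {z}"
  shows "lexdc Y k F"
  unfolding lexdc_def
proof (intro conjI ballI impI)
  show "F \<subseteq> layer k Y" by fact
  fix x y assume "x \<in> F" "y \<in> layer k Y" "lex_less y x"
  then have "x = z" "y = z" using assms by auto
  then show "y \<in> F" using \<open>lex_less y x\<close> unfolding lex_less_def by simp
qed

lemma inj_ins: "G \<subseteq> Pow X' \<Longrightarrow> i \<notin> X' \<Longrightarrow> inj_on (insert i) G"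
proof (rule inj_onI)
  fix a b assume "G \<subseteq> Pow X'" "i \<notin> X'" "a \<in> G" "b \<in> G" "insert i a = insert i b"
  then have "i \<notin> a" "i \<notin> b" by auto
  then show "a = b" using \<open>insert i a = insert i b\<close> by (metis Diff_insert_absorb)
qed

lemma card_ins: "G \<subseteq> Pow X' \<Longrightarrow> i \<notin> X' \<Longrightarrow> card (insert i ` G) = card G"
  by (rule card_image[OF inj_ins])

lemma upsh_empty: "finite X \<Longrightarrow> F \<subseteq> layer k X \<Longrightarrow> j < k \<Longrightarrow> upsh X j F = {}"
proof (rule ccontr)
  assume a: "finite X" "F \<subseteq> layer k X" "j < k" "upsh X j F \<noteq> {}"
  then obtain y x where y: "y \<subseteq> X" "card y = j" "x \<in> F" "x \<subseteq> y" unfolding upsh_def by auto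
  have "finite y" using y a finite_subset by blast
  then have "card x \<le> card y" using y card_mono by blast
  moreover have "card x = k" using a y unfolding layer_def by auto
  ultimately show False using a y by simp
qed

lemma downsh_empty: "finite X \<Longrightarrow> F \<subseteq> layer k X \<Longrightarrow> k < j \<Longrightarrow> downsh j F = {}"
proof (rule ccontr)
  assume a: "finite X" "F \<subseteq> layer k X" "k < j" "downsh j F \<noteq> {}"
  then obtain y x where y: "card y = j" "x \<in> F" "y \<subseteq> x" unfolding downsh_def by auto
  have "x \<subseteq> X" "card x = k" using a y unfolding layer_def by auto
  then have "finite x" using a finite_subset by blast
  then have "card y \<le> card x" using y card_mono by blast
  then show False using a y \<open>card x = k\<close> by simp
qed

lemma upsh_self:
  assumes a: "finite X" "F \<subseteq> layer k X"
  shows "upsh X k F = F"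
proof (intro equalityI subsetI)
  fix y assume "y \<in> upsh X k F"
  then obtain x where y: "y \<subseteq> X" "card y = k" "x \<in> F" "x \<subseteq> y" unfolding upsh_def by auto
  have "finite y" using y a finite_subset by blast
  moreover have "card x = k" using a y unfolding layer_def by auto
  ultimately have "x = y" using y card_subset_eq by metis
  then show "y \<in> F" using y by simp
next
  fix y assume "y \<in> F"
  then show "y \<in> upsh X k F" using a unfolding upsh_def layer_def by auto
qed

lemma downsh_self:
  assumes a: "finite X" "F \<subseteq> layer k X"
  shows "downsh k F = F"
proof (intro equalityI subsetI)
  fix y assume "y \<in> downsh k F"
  then obtain x where y: "card y = k" "x \<in> F" "y \<subseteq> x" unfolding downsh_def by auto
  have "x \<subseteq> X" "card x = k" using a y unfolding layer_def by auto
  then have "finite x" using a finite_subset by blast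
  then have "x = y" using y \<open>card x = k\<close> card_subset_eq by metis
  then show "y \<in> F" using y by simp
next
  fix y assume "y \<in> F"
  then show "y \<in> downsh k F" using a unfolding downsh_def layer_def by auto
qed

lemma U1:
  assumes fX: "finite X'" and i: "i \<notin> X'" and F: "F \<subseteq> layer m X'"
  shows "upsh (insert i X') (Suc j) (insert i ` F) = insert i ` upsh X' j F"
proof
  show "upsh (insert i X') (Suc j) (insert i ` F) \<subseteq> insert i ` upsh X' j F"
  proof
    fix y assume "y \<in> upsh (insert i X') (Suc j) (insert i ` F)"
    then obtain f where y: "y \<subseteq> insert i X'" "card y = Suc j" "f \<in> F" "insert i f \<subseteq> y"
      unfolding upsh_def by auto
    have fy: "finite y" using y fX finite_subset by blast
    have "f \<subseteq> X'" using F y unfolding layer_def by auto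
    then have "y - {i} \<in> upsh X' j F" using y fy i unfolding upsh_def by auto
    moreover have "y = insert i (y - {i})" using y by auto
    ultimately show "y \<in> insert i ` upsh X' j F" by blast
  qed
next
  show "insert i ` upsh X' j F \<subseteq> upsh (insert i X') (Suc j) (insert i ` F)"
  proof
    fix y assume "y \<in> insert i ` upsh X' j F"
    then obtain y' f where y: "y = insert i y'" "y' \<subseteq> X'" "card y' = j" "f \<in> F" "f \<subseteq> y'"
      unfolding upsh_def by auto
    have "finite y'" using y fX finite_subset by blast
    moreover have "i \<notin> y'" using y i by auto
    ultimately have "card y = Suc j" using y by auto
    then show "y \<in> upsh (insert i X') (Suc j) (insert i ` F)"
      using y unfolding upsh_def by auto
  qed
qed

lemma D1:
  assumes fX: "finite X'" and i: "i \<notin> X'" and F: "F \<subseteq> layer (k - 1) X'"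
    and k: "k \<le> card X'" "Suc j \<le> k"
  shows "downsh (Suc j) (layer k X' \<union> insert i ` F) = layer (Suc j) X' \<union> insert i ` downsh j F"
proof
  show "downsh (Suc j) (layer k X' \<union> insert i ` F) \<subseteq> layer (Suc j) X' \<union> insert i ` downsh j F"
  proof
    fix y assume "y \<in> downsh (Suc j) (layer k X' \<union> insert i ` F)"
    then obtain x where y: "card y = Suc j" "y \<subseteq> x" "x \<in> layer k X' \<union> insert i ` F"
      unfolding downsh_def by auto
    show "y \<in> layer (Suc j) X' \<union> insert i ` downsh j F"
    proof (cases "x \<in> layer k X'")
      case True
      then show ?thesis using y unfolding layer_def by auto
    next
      case False
      then obtain f where f: "f \<in> F" "x = insert i f" using y by auto
      have fX': "f \<subseteq> X'" using F f unfolding layer_def by auto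
      show ?thesis
      proof (cases "i \<in> y")
        case True
        have "finite y" using y(1) card_ge_0_finite[of y] by simp
        then have "y - {i} \<in> downsh j F" using y f True unfolding downsh_def by auto
        moreover have "y = insert i (y - {i})" using True by auto
        ultimately show ?thesis by blast
      next
        case False
        then have "y \<subseteq> X'" using y f fX' by auto
        then show ?thesis using y unfolding layer_def by auto
      qed
    qed
  qed
next
  show "layer (Suc j) X' \<union> insert i ` downsh j F \<subseteq> downsh (Suc j) (layer k X' \<union> insert i ` F)"
  proof
    fix y assume "y \<in> layer (Suc j) X' \<union> insert i ` downsh j F"
    then show "y \<in> downsh (Suc j) (layer k X' \<union> insert i ` F)"
    proof
      assume y: "y \<in> layer (Suc j) X'"
      then obtain x where "y \<subseteq> x" "x \<subseteq> X'" "card x = k"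
        using ext_subset[OF fX, of y k] k unfolding layer_def by auto
      then show ?thesis using y unfolding downsh_def layer_def by auto
    next
      assume "y \<in> insert i ` downsh j F"
      then obtain y' f where y: "y = insert i y'" "card y' = j" "f \<in> F" "y' \<subseteq> f"
        unfolding downsh_def by auto
      have fX': "f \<subseteq> X'" using F y unfolding layer_def by auto
      have yX: "y' \<subseteq> X'" using y(4) fX' by (rule subset_trans)
      have "finite y'" using finite_subset[OF yX fX] .
      moreover have "i \<notin> y'" using yX i by blast
      ultimately have "card y = Suc j" using y(1,2) by simp
      then show ?thesis using y unfolding downsh_def by auto
    qed
  qed
qed

lemma U2:
  assumes fX: "finite X'" and i: "i \<notin> X'" and F: "F \<subseteq> layer k X'"
    and k: "1 \<le> k" "k \<le> j"
  shows "upsh (insert i X') j ({x \<in> layer k (insert i X'). i \<in> x} \<union> F)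
       = {y \<in> layer j (insert i X'). i \<in> y} \<union> upsh X' j F"
proof
  show "upsh (insert i X') j ({x \<in> layer k (insert i X'). i \<in> x} \<union> F)
       \<subseteq> {y \<in> layer j (insert i X'). i \<in> y} \<union> upsh X' j F"
  proof
    fix y assume "y \<in> upsh (insert i X') j ({x \<in> layer k (insert i X'). i \<in> x} \<union> F)"
    then obtain x where y: "y \<subseteq> insert i X'" "card y = j" "x \<subseteq> y"
       "x \<in> {x \<in> layer k (insert i X'). i \<in> x} \<union> F"
      unfolding upsh_def by auto
    show "y \<in> {y \<in> layer j (insert i X'). i \<in> y} \<union> upsh X' j F"
    proof (cases "i \<in> y")
      case True
      then show ?thesis using y unfolding layer_def by auto
    next
      case False
      then have "x \<in> F" using y by auto
      then show ?thesis using y False unfolding upsh_def by auto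
    qed
  qed
next
  show "{y \<in> layer j (insert i X'). i \<in> y} \<union> upsh X' j F
       \<subseteq> upsh (insert i X') j ({x \<in> layer k (insert i X'). i \<in> x} \<union> F)"
  proof
    fix y assume "y \<in> {y \<in> layer j (insert i X'). i \<in> y} \<union> upsh X' j F"
    then show "y \<in> upsh (insert i X') j ({x \<in> layer k (insert i X'). i \<in> x} \<union> F)"
    proof
      assume y: "y \<in> {y \<in> layer j (insert i X'). i \<in> y}"
      have fy: "finite y" using y fX finite_subset unfolding layer_def by auto
      obtain x where "{i} \<subseteq> x" "x \<subseteq> y" "card x = k"
        using ext_subset[OF fy, of "{i}" k] k y unfolding layer_def by auto
      then show ?thesis using y unfolding upsh_def layer_def by auto
    next
      assume "y \<in> upsh X' j F"
      then show ?thesis unfolding upsh_def by auto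
    qed
  qed
qed



lemma layer_split:
  assumes "a \<in> X"
  shows "layer k X = {x \<in> layer k X. a \<in> x} \<union> layer k (X - {a})"
    "{x \<in> layer k X. a \<in> x} \<inter> layer k (X - {a}) = {}"
  using assms unfolding layer_def by auto

lemma card_minus_one_set:
  assumes "finite X" "y \<subseteq> X" "card y = card X - 1" "X \<noteq> {}"
  shows "\<exists>b\<in>X. y = X - {b}"
proof -
  have fy: "finite y" using assms(1,2) by (rule finite_subset[rotated])
  have "card X > 0" using assms(1,4) by (simp add: card_gt_0_iff)
  have "card (X - y) = card X - card y" using card_Diff_subset[OF fy assms(2)] .
  then have "card (X - y) = 1" using assms(3) \<open>card X > 0\<close> by simp
  then obtain b where "X - y = {b}" using card_1_singletonE by blast
  then show ?thesis using assms(2) by (intro bexI[of _ b]) auto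
qed

lemma dichotomy:
  assumes fX: "finite X" and L: "L \<subseteq> layer k X" and cu: "Cup X k L"
    and cd: "Cdown X k (layer k X - L)" and k: "1 \<le> k" "k \<le> card X"
  shows "(\<exists>i\<in>X. \<forall>x\<in>L. i \<in> x) \<or> (\<exists>i\<in>X. \<forall>x\<in>layer k X - L. i \<notin> x)"
proof (rule ccontr)
  assume neg: "\<not> ?thesis"
  then have nL: "\<forall>i\<in>X. \<exists>x\<in>L. i \<notin> x" and nM: "\<forall>i\<in>X. \<exists>x\<in>layer k X - L. i \<in> x" by auto
  have "X \<noteq> {}" using k by auto
  then obtain a where a: "a \<in> X" by blast
  define S where "S = {x \<in> layer k X. a \<in> x}"
  define T where "T = layer k (X - {a})"
  have fS: "finite S" "finite T" using finite_layer[OF fX] fX unfolding S_def T_def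
    by (auto simp: finite_layer)
  have lay: "layer k X = S \<union> T" "S \<inter> T = {}" using layer_split[OF a] unfolding S_def T_def by auto
  have cX: "card (layer k X) = card S + card T" using lay fS card_Un_disjoint by metis
  let ?N = "card X"
  have inj1: "inj_on (\<lambda>b. X - {b}) X" by (rule inj_onI) auto
  have inj2: "inj_on (\<lambda>b. {b}) X" by (rule inj_onI) auto
  show False
  proof (cases "card L \<le> card S")
    case True
    then obtain L' where L': "L' \<subseteq> S" "card L' = card L" by (metis obtain_subset_with_card_n)
    have "L' \<subseteq> layer k X" using L' unfolding S_def by auto
    then have le: "card (upsh X (?N - 1) L) \<le> card (upsh X (?N - 1) L')"
      using cu L' unfolding Cup_def by blast
    have "(\<lambda>b. X - {b}) ` X \<subseteq> upsh X (?N - 1) L"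
    proof
      fix y assume "y \<in> (\<lambda>b. X - {b}) ` X"
      then obtain b where b: "b \<in> X" "y = X - {b}" by blast
      then obtain x where "x \<in> L" "b \<notin> x" using nL by blast
      then have "x \<subseteq> y" using L b unfolding layer_def by auto
      moreover have "card y = ?N - 1" using b fX by simp
      ultimately show "y \<in> upsh X (?N - 1) L" using b \<open>x \<in> L\<close> unfolding upsh_def by auto
    qed
    then have "card ((\<lambda>b. X - {b}) ` X) \<le> card (upsh X (?N - 1) L)"
      by (rule card_mono[OF finite_upsh[OF fX]])
    then have Nle: "?N \<le> card (upsh X (?N - 1) L)" using card_image[OF inj1] by simp
    have "upsh X (?N - 1) L' \<subseteq> (\<lambda>b. X - {b}) ` (X - {a})"
    proof
      fix y assume "y \<in> upsh X (?N - 1) L'"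
      then obtain x where y: "y \<subseteq> X" "card y = ?N - 1" "x \<in> L'" "x \<subseteq> y" unfolding upsh_def by auto
      obtain b where b: "b \<in> X" "y = X - {b}" using card_minus_one_set[OF fX y(1,2)] a by blast
      have "a \<in> x" using y L' unfolding S_def by auto
      then have "b \<noteq> a" using y b by auto
      then show "y \<in> (\<lambda>b. X - {b}) ` (X - {a})" using b by auto
    qed
    then have "card (upsh X (?N - 1) L') \<le> card ((\<lambda>b. X - {b}) ` (X - {a}))"
      by (rule card_mono[rotated]) (simp add: fX)
    also have "\<dots> \<le> card (X - {a})" by (rule card_image_le) (simp add: fX)
    also have "\<dots> = ?N - 1" using a fX by simp
    finally have "card (upsh X (?N - 1) L') \<le> ?N - 1" .
    then show False using Nle le k by linarith
  next
    case False
    have "card (layer k X - L) = card (layer k X) - card L"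
      by (rule card_Diff_subset[OF finite_subset[OF L finite_layer[OF fX]] L])
    then have "card (layer k X - L) \<le> card T" using cX False by linarith
    then obtain N' where N': "N' \<subseteq> T" "card N' = card (layer k X - L)" by (metis obtain_subset_with_card_n)
    have "N' \<subseteq> layer k X" using N' unfolding T_def layer_def by auto
    then have le: "card (downsh 1 (layer k X - L)) \<le> card (downsh 1 N')"
      using cd N' unfolding Cdown_def by blast
    have "(\<lambda>b. {b}) ` X \<subseteq> downsh 1 (layer k X - L)"
    proof
      fix y assume "y \<in> (\<lambda>b. {b}) ` X"
      then obtain b where b: "b \<in> X" "y = {b}" by blast
      then obtain x where "x \<in> layer k X - L" "b \<in> x" using nM by blast
      then show "y \<in> downsh 1 (layer k X - L)" using b unfolding downsh_def by auto
    qed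
    moreover have "layer k X - L \<subseteq> Pow X" unfolding layer_def by auto
    ultimately have "card ((\<lambda>b. {b}) ` X) \<le> card (downsh 1 (layer k X - L))"
      using card_mono[OF finite_downsh[OF fX]] by blast
    then have Nle: "?N \<le> card (downsh 1 (layer k X - L))" using card_image[OF inj2] by simp
    have "downsh 1 N' \<subseteq> (\<lambda>b. {b}) ` (X - {a})"
    proof
      fix y assume "y \<in> downsh 1 N'"
      then obtain x where y: "card y = 1" "x \<in> N'" "y \<subseteq> x" unfolding downsh_def by auto
      obtain b where b: "y = {b}" using y(1) card_1_singletonE by blast
      have "x \<subseteq> X - {a}" using y N' unfolding T_def layer_def by auto
      then show "y \<in> (\<lambda>b. {b}) ` (X - {a})" using b y by auto
    qed
    then have "card (downsh 1 N') \<le> card ((\<lambda>b. {b}) ` (X - {a}))"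
      by (rule card_mono[rotated]) (simp add: fX)
    also have "\<dots> \<le> card (X - {a})" by (rule card_image_le) (simp add: fX)
    also have "\<dots> = ?N - 1" using a fX by simp
    finally have "card (downsh 1 N') \<le> ?N - 1" .
    then show False using Nle le k by linarith
  qed
qed


lemma layer0: "finite Y \<Longrightarrow> layer 0 Y \<subseteq> {{}}"
  unfolding layer_def by (auto dest: finite_subset)

lemma layer_top: "finite Y \<Longrightarrow> card Y \<le> k \<Longrightarrow> layer k Y \<subseteq> {Y}"
  unfolding layer_def by (auto dest: card_seteq)

lemma layer_mono: "X' \<subseteq> X \<Longrightarrow> layer k X' \<subseteq> layer k X"
  unfolding layer_def by auto

lemma main_rec:
  "finite X \<Longrightarrow> finite Y \<Longrightarrow> card Y = card X \<Longrightarrow> L \<subseteq> layer k X \<Longrightarrow> Cup X k L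
   \<Longrightarrow> Cdown X k (layer k X - L) \<Longrightarrow> \<exists>s. bij_betw s X Y \<and> lexdc Y k ((\<lambda>x. s ` x) ` L)"
proof (induction "card X" arbitrary: X Y k L rule: less_induct)
  case less
  note fX = less.prems(1) and fY = less.prems(2) and cY = less.prems(3) and L = less.prems(4)
    and cu = less.prems(5) and cd = less.prems(6)
  obtain s0 where s0: "bij_betw s0 X Y" using finite_same_card_bij[OF fX fY] cY by metis
  show ?case
  proof (cases "L = {} \<or> k = 0 \<or> card X \<le> k")
    case True
    have im: "(\<lambda>x. s0 ` x) ` L \<subseteq> layer k Y" by (rule image_layer[OF s0 L])
    have "lexdc Y k ((\<lambda>x. s0 ` x) ` L)"
    proof (cases "L = {}")
      case True
      then show ?thesis unfolding lexdc_def by simp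
    next
      case False
      then have "k = 0 \<or> card Y \<le> k" using \<open>L = {} \<or> k = 0 \<or> card X \<le> k\<close> cY by simp
      then show ?thesis
      proof
        assume "k = 0"
        then show ?thesis using lexdc_single[OF im] layer0[OF fY] by blast
      next
        assume "card Y \<le> k"
        then show ?thesis using lexdc_single[OF im] layer_top[OF fY] by blast
      qed
    qed
    then show ?thesis using s0 by blast
  next
    case False
    then have Lne: "L \<noteq> {}" and k1: "1 \<le> k" and kX: "k < card X" by auto
    have "X \<noteq> {}" using kX by auto
    have "Y \<noteq> {}" using kX cY by auto
    define a where "a = Min Y"
    have aY: "a \<in> Y" unfolding a_def using fY \<open>Y \<noteq> {}\<close> by simp
    define Y' where "Y' = Y - {a}"
    have fY': "finite Y'" unfolding Y'_def using fY by simp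
    have YY: "Y = insert a Y'" "a \<notin> Y'" unfolding Y'_def using aY by auto
    have dich: "(\<exists>i\<in>X. \<forall>x\<in>L. i \<in> x) \<or> (\<exists>i\<in>X. \<forall>x\<in>layer k X - L. i \<notin> x)"
      using dichotomy[OF fX L cu cd k1] kX by simp
    then show ?thesis
    proof
      assume "\<exists>i\<in>X. \<forall>x\<in>L. i \<in> x"
      then obtain i where iX: "i \<in> X" and iL: "\<forall>x\<in>L. i \<in> x" by blast
      define X' where "X' = X - {i}"
      have fX': "finite X'" unfolding X'_def using fX by simp
      have XX: "X = insert i X'" "i \<notin> X'" unfolding X'_def using iX by auto
      have cX': "card X' < card X" unfolding X'_def using card_Diff1_less[OF fX iX] .
      have cY': "card Y' = card X'" unfolding X'_def Y'_def using fX fY iX aY cY by simp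
      define L' where "L' = (\<lambda>x. x - {i}) ` L"
      have hL: "L = insert i ` L'"
      proof -
        have "\<forall>x\<in>L. insert i (x - {i}) = x" using iL by auto
        then show ?thesis unfolding L'_def image_image by simp
      qed
      have L'sub: "L' \<subseteq> layer (k - 1) X'"
      proof
        fix x' assume "x' \<in> L'"
        then obtain x where x: "x \<in> L" "x' = x - {i}" unfolding L'_def by blast
        have "x \<subseteq> X" "card x = k" using x L unfolding layer_def by auto
        moreover have "finite x" using \<open>x \<subseteq> X\<close> fX finite_subset by blast
        ultimately show "x' \<in> layer (k - 1) X'" using x iL unfolding layer_def X'_def by auto
      qed
      have L'P: "L' \<subseteq> Pow X'" using L'sub unfolding layer_def by auto
      define M' where "M' = layer (k - 1) X' - L'"
      have M'sub: "M' \<subseteq> layer (k - 1) X'" unfolding M'_def by auto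
      have insl: "insert i ` F \<subseteq> layer k X" if "F \<subseteq> layer (k - 1) X'" for F
      proof
        fix y assume "y \<in> insert i ` F"
        then obtain f where f: "f \<in> F" "y = insert i f" by blast
        have "f \<subseteq> X'" "card f = k - 1" using f that unfolding layer_def by auto
        moreover have "finite f" using \<open>f \<subseteq> X'\<close> fX' finite_subset by blast
        moreover have "i \<notin> f" using \<open>f \<subseteq> X'\<close> XX by blast
        ultimately show "y \<in> layer k X" using f k1 XX unfolding layer_def by auto
      qed
      have hM: "layer k X - L = layer k X' \<union> insert i ` M'"
      proof (intro equalityI subsetI)
        fix x assume x: "x \<in> layer k X - L"
        show "x \<in> layer k X' \<union> insert i ` M'"
        proof (cases "i \<in> x")
          case False
          then show ?thesis using x unfolding layer_def X'_def by auto
        next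
          case True
          have "x \<subseteq> X" "card x = k" using x unfolding layer_def by auto
          moreover have "finite x" using \<open>x \<subseteq> X\<close> fX finite_subset by blast
          ultimately have "x - {i} \<in> layer (k - 1) X'" using True unfolding layer_def X'_def by auto
          moreover have "x - {i} \<notin> L'"
          proof
            assume "x - {i} \<in> L'"
            then have "insert i (x - {i}) \<in> L" using hL by blast
            then show False using x True by (simp add: insert_absorb)
          qed
          ultimately have "x - {i} \<in> M'" unfolding M'_def by blast
          moreover have "x = insert i (x - {i})" using True by auto
          ultimately show ?thesis by blast
        qed
      next
        fix x assume x: "x \<in> layer k X' \<union> insert i ` M'"
        then show "x \<in> layer k X - L"
        proof
          assume "x \<in> layer k X'"
          moreover then have "i \<notin> x" using XX unfolding layer_def by auto
          ultimately show ?thesis using iL layer_mono[of X' X k] XX by auto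
        next
          assume "x \<in> insert i ` M'"
          then obtain m where m: "m \<in> M'" "x = insert i m" by blast
          have "x \<in> layer k X" using insl[OF M'sub] m by blast
          moreover have "x \<notin> L"
          proof
            assume "x \<in> L"
            then have "x - {i} \<in> L'" unfolding L'_def by blast
            moreover have "x - {i} = m" using m M'sub XX unfolding layer_def by auto
            ultimately show False using m unfolding M'_def by blast
          qed
          ultimately show ?thesis by blast
        qed
      qed
      have cu': "Cup X' (k - 1) L'"
        unfolding Cup_def
      proof (intro allI impI)
        fix j L'' assume L'': "L'' \<subseteq> layer (k - 1) X'" "card L'' = card L'"
        have "insert i ` L'' \<subseteq> layer k X" using insl[OF L''(1)] .
        moreover have "card (insert i ` L'') = card L"
          using card_ins[of L'' X' i] card_ins[OF L'P XX(2)] L'' XX hL unfolding layer_def by auto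
        ultimately have "card (upsh X (Suc j) L) \<le> card (upsh X (Suc j) (insert i ` L''))"
          using cu unfolding Cup_def by blast
        then have "card (insert i ` upsh X' j L') \<le> card (insert i ` upsh X' j L'')"
          using U1[OF fX' XX(2) L'sub, of j] U1[OF fX' XX(2) L''(1), of j] XX hL by simp
        moreover have "upsh X' j F \<subseteq> Pow X'" for F unfolding upsh_def by auto
        ultimately show "card (upsh X' j L') \<le> card (upsh X' j L'')"
          using card_ins[OF _ XX(2)] by metis
      qed
      have cd': "Cdown X' (k - 1) (layer (k - 1) X' - L')"
        unfolding Cdown_def
      proof (intro allI impI)
        fix j N'' assume N'': "N'' \<subseteq> layer (k - 1) X'" "card N'' = card (layer (k - 1) X' - L')"
        show "card (downsh j (layer (k - 1) X' - L')) \<le> card (downsh j N'')"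
        proof (cases "Suc j \<le> k")
          case False
          then have "downsh j (layer (k - 1) X' - L') = {}"
            using downsh_empty[OF fX', of "layer (k - 1) X' - L'" "k - 1" j] k1 by auto
          then show ?thesis by simp
        next
          case True
          have kX': "k \<le> card X'" using kX XX fX' by simp
          have fl: "finite (layer k X')" using finite_layer[OF fX'] .
          have disj: "layer k X' \<inter> insert i ` F = {}" for F using XX unfolding layer_def by auto
          have cF: "card (layer k X' \<union> insert i ` F) = card (layer k X') + card F" if "F \<subseteq> layer (k - 1) X'" for F
          proof -
            have "finite F" using that finite_layer[OF fX'] finite_subset by blast
            then have "card (layer k X' \<union> insert i ` F) = card (layer k X') + card (insert i ` F)"
              using card_Un_disjoint[OF fl] disj by blast
            moreover have "card (insert i ` F) = card F"
              by (rule card_ins[OF _ XX(2)]) (use that in \<open>auto simp: layer_def\<close>)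
            ultimately show ?thesis by simp
          qed
          have dP: "downsh j F \<subseteq> Pow X'" if "F \<subseteq> layer (k - 1) X'" for F
            using that unfolding downsh_def layer_def by auto
          have cD: "card (downsh (Suc j) (layer k X' \<union> insert i ` F))
                    = card (layer (Suc j) X') + card (downsh j F)" if "F \<subseteq> layer (k - 1) X'" for F
          proof -
            have "finite (downsh j F)" using finite_downsh[OF fX', of F j] that unfolding layer_def by auto
            moreover have "layer (Suc j) X' \<inter> insert i ` downsh j F = {}" using XX unfolding layer_def by auto
            ultimately have "card (layer (Suc j) X' \<union> insert i ` downsh j F)
                = card (layer (Suc j) X') + card (insert i ` downsh j F)"
              by (intro card_Un_disjoint[OF finite_layer[OF fX']] finite_imageI)
            moreover have "card (insert i ` downsh j F) = card (downsh j F)"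
              using card_ins[OF dP[OF that] XX(2)] .
            ultimately show ?thesis using D1[OF fX' XX(2) that kX' True] by simp
          qed
          have "layer k X' \<subseteq> layer k X" by (rule layer_mono) (auto simp: X'_def)
          then have "layer k X' \<union> insert i ` N'' \<subseteq> layer k X"
            using insl[OF N''(1)] by (rule Un_least)
          moreover have "card (layer k X' \<union> insert i ` N'') = card (layer k X - L)"
            using cF[OF N''(1)] cF[OF M'sub] hM N''(2) unfolding M'_def by simp
          ultimately have "card (downsh (Suc j) (layer k X - L)) \<le> card (downsh (Suc j) (layer k X' \<union> insert i ` N''))"
            using cd unfolding Cdown_def by blast
          then show ?thesis using cD[OF N''(1)] cD[OF M'sub] hM unfolding M'_def by simp
        qed
      qed
      obtain s' where s': "bij_betw s' X' Y'" "lexdc Y' (k - 1) ((\<lambda>x. s' ` x) ` L')"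
        using less.hyps[OF cX' fX' fY' cY' L'sub cu' cd'] by blast
      define s where "s = s'(i := a)"
      have bs: "bij_betw s X Y" unfolding s_def XX(1) YY(1) using bij_upd[OF s'(1) XX(2) YY(2)] .
      have "(\<lambda>x. s ` x) ` L = insert a ` ((\<lambda>x. s' ` x) ` L')"
      proof -
        have "s ` (insert i x') = insert a (s' ` x')" if "x' \<in> L'" for x'
        proof -
          have "i \<notin> x'" using that L'P XX(2) by blast
          then show ?thesis unfolding s_def by auto
        qed
        then show ?thesis unfolding hL image_image by (auto simp: image_iff)
      qed
      moreover have "lexdc Y k (insert a ` ((\<lambda>x. s' ` x) ` L'))"
        using lexdc_ins[OF fY a_def aY k1] s'(2) unfolding Y'_def by simp
      ultimately show ?thesis using bs by auto
    next
      assume "\<exists>i\<in>X. \<forall>x\<in>layer k X - L. i \<notin> x"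
      then obtain i where iX: "i \<in> X" and iM: "\<forall>x\<in>layer k X - L. i \<notin> x" by blast
      define X' where "X' = X - {i}"
      have fX': "finite X'" unfolding X'_def using fX by simp
      have XX: "X = insert i X'" "i \<notin> X'" unfolding X'_def using iX by auto
      have cX': "card X' < card X" unfolding X'_def using card_Diff1_less[OF fX iX] .
      have cY': "card Y' = card X'" unfolding X'_def Y'_def using fX fY iX aY cY by simp
      have lm: "layer k X' \<subseteq> layer k X" by (rule layer_mono) (auto simp: X'_def)
      define Si where "Si = {x \<in> layer k X. i \<in> x}"
      define L'' where "L'' = {x \<in> L. i \<notin> x}"
      have SiL: "Si \<subseteq> L" using iM unfolding Si_def by blast
      have hL: "L = Si \<union> L''" using SiL L unfolding Si_def L''_def by auto
      have L''sub: "L'' \<subseteq> layer k X'" using L unfolding L''_def layer_def X'_def by auto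
      have hM: "layer k X - L = layer k X' - L''"
        using iM lm unfolding L''_def layer_def X'_def by auto
      have fl: "finite (layer k X)" using finite_layer[OF fX] .
      have fSi: "finite Si" unfolding Si_def using fl by simp
      have disjS: "Si \<inter> F = {}" if "F \<subseteq> layer k X'" for F
        using that XX unfolding Si_def layer_def by auto
      have cSF: "card (Si \<union> F) = card Si + card F" if "F \<subseteq> layer k X'" for F
      proof -
        have "finite F" using that finite_layer[OF fX'] finite_subset by blast
        then show ?thesis using card_Un_disjoint[OF fSi] disjS[OF that] by blast
      qed
      have cd': "Cdown X' k (layer k X' - L'')"
        unfolding Cdown_def
      proof (intro allI impI)
        fix j N assume N: "N \<subseteq> layer k X'" "card N = card (layer k X' - L'')"
        have "N \<subseteq> layer k X" using N(1) lm by (rule subset_trans)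
        then show "card (downsh j (layer k X' - L'')) \<le> card (downsh j N)"
          using cd N(2) hM unfolding Cdown_def by metis
      qed
      have cu': "Cup X' k L''"
        unfolding Cup_def
      proof (intro allI impI)
        fix j F assume F: "F \<subseteq> layer k X'" "card F = card L''"
        show "card (upsh X' j L'') \<le> card (upsh X' j F)"
        proof (cases "j < k")
          case True
          then show ?thesis using upsh_empty[OF fX' L''sub True] by simp
        next
          case False
          then have kj: "k \<le> j" by simp
          define C where "C = {y \<in> layer j (insert i X'). i \<in> y}"
          have fC: "finite C" unfolding C_def using finite_layer[of "insert i X'" j] fX' by simp
          have cU: "card (upsh X j (Si \<union> G)) = card C + card (upsh X' j G)" if "G \<subseteq> layer k X'" for G
          proof -
            have "upsh X j (Si \<union> G) = C \<union> upsh X' j G"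
              using U2[OF fX' XX(2) that k1 kj] unfolding C_def Si_def XX(1) .
            moreover have "C \<inter> upsh X' j G = {}" using XX(2) unfolding C_def upsh_def by auto
            ultimately show ?thesis using card_Un_disjoint[OF fC finite_upsh[OF fX']] by simp
          qed
          have "Si \<union> F \<subseteq> layer k X" using F(1) lm unfolding Si_def by auto
          moreover have "card (Si \<union> F) = card L" using cSF[OF F(1)] cSF[OF L''sub] F(2) hL by simp
          ultimately have "card (upsh X j L) \<le> card (upsh X j (Si \<union> F))"
            using cu unfolding Cup_def by blast
          then show ?thesis using cU[OF F(1)] cU[OF L''sub] hL by simp
        qed
      qed
      obtain s' where s': "bij_betw s' X' Y'" "lexdc Y' k ((\<lambda>x. s' ` x) ` L'')"
        using less.hyps[OF cX' fX' fY' cY' L''sub cu' cd'] by blast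
      define s where "s = s'(i := a)"
      have bs: "bij_betw s X Y" unfolding s_def XX(1) YY(1) using bij_upd[OF s'(1) XX(2) YY(2)] .
      have im2: "(\<lambda>x. s ` x) ` L'' = (\<lambda>x. s' ` x) ` L''"
      proof (rule image_cong[OF refl])
        fix x assume "x \<in> L''"
        then have "i \<notin> x" unfolding L''_def by blast
        then show "s ` x = s' ` x" unfolding s_def by (intro image_cong) auto
      qed
      have im1: "(\<lambda>x. s ` x) ` Si = {y \<in> layer k Y. a \<in> y}"
      proof -
        have "Si = {x. x \<subseteq> X \<and> (card (s ` x) = k \<and> a \<in> s ` x)}"
        proof (intro equalityI subsetI)
          fix x assume "x \<in> Si"
          then have x: "x \<subseteq> X" "card x = k" "i \<in> x" unfolding Si_def layer_def by auto
          have "s i = a" unfolding s_def by simp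
          then show "x \<in> {x. x \<subseteq> X \<and> (card (s ` x) = k \<and> a \<in> s ` x)}"
            using x bij_card_sub[OF bs x(1)] by force
        next
          fix x assume "x \<in> {x. x \<subseteq> X \<and> (card (s ` x) = k \<and> a \<in> s ` x)}"
          then have x: "x \<subseteq> X" "card (s ` x) = k" "a \<in> s ` x" by auto
          then obtain z where z: "z \<in> x" "s z = a" by blast
          have "s i = a" unfolding s_def by simp
          then have "z = i" using z x iX bs unfolding bij_betw_def inj_on_def by blast
          then show "x \<in> Si" using z x bij_card_sub[OF bs x(1)] unfolding Si_def layer_def by auto
        qed
        then have "(\<lambda>x. s ` x) ` Si = {y. y \<subseteq> Y \<and> (card y = k \<and> a \<in> y)}"
          using bij_image_sets[OF bs, of "\<lambda>y. card y = k \<and> a \<in> y"] by simp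
        then show ?thesis unfolding layer_def by auto
      qed
      have "(\<lambda>x. s ` x) ` L = {y \<in> layer k Y. a \<in> y} \<union> (\<lambda>x. s' ` x) ` L''"
        using im1 im2 hL by (simp add: image_Un)
      moreover have "lexdc Y k ({y \<in> layer k Y. a \<in> y} \<union> (\<lambda>x. s' ` x) ` L'')"
        using lexdc_star[OF fY a_def aY] s'(2) unfolding Y'_def by simp
      ultimately show ?thesis using bs by auto
    qed
  qed
qed



lemma hdist_split:
  assumes "finite x" "finite y"
  shows "hdist y x = card (y - x) + card (x - y)"
proof -
  have "symdiff y x = (y - x) \<union> (x - y)" unfolding symdiff_def by auto
  moreover have "(y - x) \<inter> (x - y) = {}" by auto
  ultimately show ?thesis unfolding hdist_def using assms by (simp add: card_Un_disjoint)
qed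

lemma card_un_diff: "finite x \<Longrightarrow> finite y \<Longrightarrow> card (x \<union> y) = card x + card (y - x)"
proof -
  assume f: "finite x" "finite y"
  show ?thesis using card_Un_disjoint[of x "y - x"] f by simp
qed

lemma card_bal:
  assumes "finite x" "finite y"
  shows "card y + card (x - y) = card x + card (y - x)"
  using card_un_diff[OF assms] card_un_diff[OF assms(2,1)] by (simp add: Un_commute)

lemma diff_empty_sub: "finite x \<Longrightarrow> card (x - y) = 0 \<Longrightarrow> x \<subseteq> y"
  by auto

lemma cube_finite: "x \<in> cube n \<Longrightarrow> finite x"
  unfolding cube_def by (auto dest: finite_subset)

definition Below :: "nat \<Rightarrow> nat \<Rightarrow> nat set set" where
  "Below n j = {y \<in> cube n. card y < j}"
definition Above :: "nat \<Rightarrow> nat \<Rightarrow> nat set set" where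
  "Above n j = {y \<in> cube n. j < card y}"

lemma NB:
  assumes k: "1 \<le> k" and L0: "L0 \<subseteq> layer k {1..n}"
  shows "nbhd n s (Below n k \<union> L0) = Below n (k + s) \<union> upsh {1..n} (k + s) L0"
proof (intro equalityI subsetI)
  fix y assume "y \<in> nbhd n s (Below n k \<union> L0)"
  then obtain x where y: "y \<in> cube n" and x: "x \<in> Below n k \<union> L0" and d: "hdist y x \<le> s"
    unfolding nbhd_def by auto
  have xc: "x \<in> cube n" using x L0 unfolding Below_def layer_def cube_def by auto
  have fx: "finite x" "finite y" using xc y cube_finite by auto
  have hs: "hdist y x = card (y - x) + card (x - y)" using hdist_split[OF fx] .
  have bal: "card y + card (x - y) = card x + card (y - x)" using card_bal[OF fx] .
  show "y \<in> Below n (k + s) \<union> upsh {1..n} (k + s) L0"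
  proof (cases "x \<in> Below n k")
    case True
    then have "card x < k" unfolding Below_def by auto
    then have "card y < k + s" using hs bal d by linarith
    then show ?thesis using y unfolding Below_def by auto
  next
    case False
    then have xL: "x \<in> L0" using x by auto
    then have cx: "card x = k" using L0 unfolding layer_def by auto
    show ?thesis
    proof (cases "card y < k + s")
      case True
      then show ?thesis using y unfolding Below_def by auto
    next
      case False
      then have "card (x - y) = 0" using hs bal d cx by linarith
      then have "x \<subseteq> y" by (rule diff_empty_sub[OF fx(1)])
      moreover have "card y = k + s" using hs bal d cx False by linarith
      ultimately show ?thesis using y xL unfolding upsh_def cube_def by auto
    qed
  qed
next
  fix y assume "y \<in> Below n (k + s) \<union> upsh {1..n} (k + s) L0"
  then show "y \<in> nbhd n s (Below n k \<union> L0)"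
  proof
    assume yB: "y \<in> Below n (k + s)"
    then have y: "y \<in> cube n" "card y < k + s" unfolding Below_def by auto
    have fy: "finite y" using y cube_finite by auto
    show ?thesis
    proof (cases "card y < k")
      case True
      then have "y \<in> Below n k" using y unfolding Below_def by auto
      moreover have "hdist y y = 0" unfolding hdist_def symdiff_def by simp
      ultimately show ?thesis using y unfolding nbhd_def by (auto intro!: bexI[of _ y])
    next
      case False
      obtain x where x: "{} \<subseteq> x" "x \<subseteq> y" "card x = k - 1"
        using ext_subset[OF fy, of "{}" "k - 1"] False by fastforce
      have fx: "finite x" using x fy finite_subset by blast
      have xB: "x \<in> Below n k" using x y k unfolding Below_def cube_def by auto
      have "hdist y x = card (y - x) + card (x - y)" using hdist_split[OF fx fy] .
      moreover have "card (y - x) = card y - card x" using card_Diff_subset[OF fx x(2)] .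
      moreover have "x - y = {}" using x by auto
      ultimately have "hdist y x \<le> s" using x y k by simp
      then show ?thesis using xB y unfolding nbhd_def by auto
    qed
  next
    assume "y \<in> upsh {1..n} (k + s) L0"
    then obtain x where y: "y \<subseteq> {1..n}" "card y = k + s" "x \<in> L0" "x \<subseteq> y" unfolding upsh_def by auto
    have fy: "finite y" using y finite_subset by blast
    have fx: "finite x" using y fy finite_subset by blast
    have cx: "card x = k" using y L0 unfolding layer_def by auto
    have "hdist y x = card (y - x) + card (x - y)" using hdist_split[OF fx fy] .
    moreover have "card (y - x) = card y - card x" using card_Diff_subset[OF fx y(4)] .
    moreover have "x - y = {}" using y by auto
    ultimately have "hdist y x \<le> s" using y cx by simp
    then show ?thesis using y unfolding nbhd_def cube_def by auto
  qed
qed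

lemma NA:
  assumes k: "k < n" "j < k" and M0: "M0 \<subseteq> layer k {1..n}"
  shows "nbhd n (k - j) (Above n k \<union> M0) = Above n j \<union> downsh j M0"
proof (intro equalityI subsetI)
  fix y assume "y \<in> nbhd n (k - j) (Above n k \<union> M0)"
  then obtain x where y: "y \<in> cube n" and x: "x \<in> Above n k \<union> M0" and d: "hdist y x \<le> k - j"
    unfolding nbhd_def by auto
  have xc: "x \<in> cube n" using x M0 unfolding Above_def layer_def cube_def by auto
  have fx: "finite x" "finite y" using xc y cube_finite by auto
  have hs: "hdist y x = card (y - x) + card (x - y)" using hdist_split[OF fx] .
  have bal: "card y + card (x - y) = card x + card (y - x)" using card_bal[OF fx] .
  show "y \<in> Above n j \<union> downsh j M0"
  proof (cases "x \<in> Above n k")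
    case True
    then have "k < card x" unfolding Above_def by auto
    then have "j < card y" using hs bal d k by linarith
    then show ?thesis using y unfolding Above_def by auto
  next
    case False
    then have xL: "x \<in> M0" using x by auto
    then have cx: "card x = k" using M0 unfolding layer_def by auto
    show ?thesis
    proof (cases "j < card y")
      case True
      then show ?thesis using y unfolding Above_def by auto
    next
      case False
      then have "card (y - x) = 0" using hs bal d cx k by linarith
      then have "y \<subseteq> x" by (rule diff_empty_sub[OF fx(2)])
      moreover have "card y = j" using hs bal d cx False k by linarith
      ultimately show ?thesis using xL unfolding downsh_def by auto
    qed
  qed
next
  fix y assume "y \<in> Above n j \<union> downsh j M0"
  then show "y \<in> nbhd n (k - j) (Above n k \<union> M0)"
  proof
    assume yB: "y \<in> Above n j"
    then have y: "y \<in> cube n" "j < card y" unfolding Above_def by auto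
    have fy: "finite y" using y cube_finite by auto
    show ?thesis
    proof (cases "k < card y")
      case True
      then have "y \<in> Above n k" using y unfolding Above_def by auto
      moreover have "hdist y y = 0" unfolding hdist_def symdiff_def by simp
      ultimately show ?thesis using y unfolding nbhd_def by (auto intro!: bexI[of _ y])
    next
      case False
      have yX: "y \<subseteq> {1..n}" using y unfolding cube_def by auto
      obtain x where x: "y \<subseteq> x" "x \<subseteq> {1..n}" "card x = k + 1"
        using ext_subset[of "{1..n}" y "k + 1"] yX False k by auto
      have fx: "finite x" using x finite_subset by blast
      have xB: "x \<in> Above n k" using x unfolding Above_def cube_def by auto
      have "hdist y x = card (y - x) + card (x - y)" using hdist_split[OF fx fy] .
      moreover have "card (x - y) = card x - card y" using card_Diff_subset[OF fy x(1)] .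
      moreover have "y - x = {}" using x by auto
      ultimately have "hdist y x \<le> k - j" using x y k False by simp
      then show ?thesis using xB y unfolding nbhd_def by auto
    qed
  next
    assume "y \<in> downsh j M0"
    then obtain x where y: "card y = j" "x \<in> M0" "y \<subseteq> x" unfolding downsh_def by auto
    have xX: "x \<subseteq> {1..n}" "card x = k" using y M0 unfolding layer_def by auto
    have fx: "finite x" using xX finite_subset by blast
    have fy: "finite y" using y fx finite_subset by blast
    have "hdist y x = card (y - x) + card (x - y)" using hdist_split[OF fx fy] .
    moreover have "card (x - y) = card x - card y" using card_Diff_subset[OF fy y(3)] .
    moreover have "y - x = {}" using y by auto
    ultimately have "hdist y x \<le> k - j" using y xX by simp
    then show ?thesis using y xX unfolding nbhd_def cube_def by auto
  qed
qed



lemma finite_cube: "finite (cube n)" unfolding cube_def by simp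

lemma sim_init:
  assumes F: "lexdc {1..n} k F"
  shows "sim_initial_segment n (Below n k \<union> F)"
  unfolding sim_initial_segment_def
proof (intro conjI ballI impI)
  show "Below n k \<union> F \<subseteq> cube n" using F unfolding Below_def lexdc_def layer_def cube_def by auto
next
  fix x y assume x: "x \<in> Below n k \<union> F" and y: "y \<in> cube n" and lt: "sim_less y x"
  show "y \<in> Below n k \<union> F"
  proof (cases "x \<in> Below n k")
    case True
    then have "card x < k" unfolding Below_def by auto
    moreover have "card y \<le> card x" using lt unfolding sim_less_def by auto
    ultimately show ?thesis using y unfolding Below_def by auto
  next
    case False
    then have xF: "x \<in> F" using x by auto
    then have cx: "card x = k" using F unfolding lexdc_def layer_def by auto
    show ?thesis
    proof (cases "card y < k")
      case True
      then show ?thesis using y unfolding Below_def by auto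
    next
      case False
      then have "card y = k" "lex_less y x" using lt cx unfolding sim_less_def by auto
      then have "y \<in> layer k {1..n}" using y unfolding layer_def cube_def by auto
      then show ?thesis using F xF \<open>lex_less y x\<close> unfolding lexdc_def by blast
    qed
  qed
qed

lemma single_eq: "A \<subseteq> {z} \<Longrightarrow> B \<subseteq> {z} \<Longrightarrow> card A = card B \<Longrightarrow> A = B"
  unfolding subset_singleton_iff by auto

lemma core:
  assumes ext: "extremal n A0" and k: "1 \<le> k" "k \<le> n"
    and sw: "Below n k \<subseteq> A0" "A0 \<subseteq> Below n (Suc k)"
  shows "\<exists>p. p permutes {1..n} \<and> sim_initial_segment n ((\<lambda>x. p ` x) ` A0)"
proof -
  define X where "X = {1..n::nat}"
  have fX: "finite X" unfolding X_def by simp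
  have cX: "card X = n" unfolding X_def by simp
  define L0 where "L0 = {y \<in> A0. card y = k}"
  have L0sub: "L0 \<subseteq> layer k X" using sw unfolding L0_def layer_def Below_def cube_def X_def by auto
  have A0eq: "A0 = Below n k \<union> L0"
  proof (intro equalityI subsetI)
    fix y assume "y \<in> A0"
    then have "y \<in> Below n (Suc k)" using sw by blast
    then have "y \<in> cube n" "card y < k \<or> card y = k" unfolding Below_def by auto
    then show "y \<in> Below n k \<union> L0" using \<open>y \<in> A0\<close> unfolding Below_def L0_def by auto
  next
    fix y assume "y \<in> Below n k \<union> L0"
    then show "y \<in> A0" using sw unfolding L0_def by auto
  qed
  have Bdisj: "Below n k \<inter> F = {}" if "F \<subseteq> layer k X" for F
    using that unfolding Below_def layer_def by auto
  have fB: "finite (Below n j)" for j unfolding Below_def using finite_cube by simp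
  have fA: "finite (Above n j)" for j unfolding Above_def using finite_cube by simp
  have fl: "finite (layer k X)" using finite_layer[OF fX] .
  have cubeA: "cube n - A0 = Above n k \<union> (layer k X - L0)"
  proof (intro equalityI subsetI)
    fix y assume y: "y \<in> cube n - A0"
    then have "y \<notin> Below n k" using sw by blast
    then have "k \<le> card y" using y unfolding Below_def by auto
    then have "k < card y \<or> card y = k" by auto
    then show "y \<in> Above n k \<union> (layer k X - L0)"
      using y unfolding Above_def layer_def L0_def cube_def X_def by auto
  next
    fix y assume y: "y \<in> Above n k \<union> (layer k X - L0)"
    then have yc: "y \<in> cube n" unfolding Above_def layer_def cube_def X_def by auto
    have "y \<notin> A0"
    proof
      assume "y \<in> A0"
      then have "card y < Suc k" using sw unfolding Below_def by auto
      then show False using y unfolding Above_def L0_def layer_def using \<open>y \<in> A0\<close> by auto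
    qed
    then show "y \<in> cube n - A0" using yc by blast
  qed
  have Adisj: "Above n k \<inter> F = {}" if "F \<subseteq> layer k X" for F
    using that unfolding Above_def layer_def by auto
  have cBF: "card (Below n k \<union> F) = card (Below n k) + card F" if "F \<subseteq> layer k X" for F
    using card_Un_disjoint[OF fB finite_subset[OF that fl] Bdisj[OF that]] .
  have cAF: "card (Above n k \<union> F) = card (Above n k) + card F" if "F \<subseteq> layer k X" for F
    using card_Un_disjoint[OF fA finite_subset[OF that fl] Adisj[OF that]] .
  have cu: "Cup X k L0"
    unfolding Cup_def
  proof (intro allI impI)
    fix j L' assume L': "L' \<subseteq> layer k X" "card L' = card L0"
    consider "j < k" | "j = k" | "k < j" by linarith
    then show "card (upsh X j L0) \<le> card (upsh X j L')"
    proof cases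
      case 1
      then show ?thesis using upsh_empty[OF fX L0sub] by simp
    next
      case 2
      then show ?thesis using upsh_self[OF fX L0sub] upsh_self[OF fX L'(1)] L'(2) by simp
    next
      case 3
      define s where "s = j - k"
      have s: "s > 0" "j = k + s" using 3 unfolding s_def by auto
      have "nbhd_minimal n s A0" using ext s unfolding extremal_def by blast
      moreover have "Below n k \<union> L' \<subseteq> cube n" using L' unfolding Below_def layer_def cube_def X_def by auto
      moreover have "card (Below n k \<union> L') = card A0" using cBF[OF L'(1)] cBF[OF L0sub] A0eq L'(2) by simp
      ultimately have le: "card (nbhd n s A0) \<le> card (nbhd n s (Below n k \<union> L'))"
        unfolding nbhd_minimal_def by blast
      have cN: "card (nbhd n s (Below n k \<union> F)) = card (Below n j) + card (upsh X j F)"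
        if "F \<subseteq> layer k X" for F
      proof -
        have "nbhd n s (Below n k \<union> F) = Below n j \<union> upsh X j F"
          using NB[OF k(1), of F n s] that s unfolding X_def by simp
        moreover have "Below n j \<inter> upsh X j F = {}" unfolding Below_def upsh_def by auto
        ultimately show ?thesis using card_Un_disjoint[OF fB finite_upsh[OF fX]] by simp
      qed
      show ?thesis using le cN[OF L0sub] cN[OF L'(1)] A0eq by simp
    qed
  qed
  have cd: "Cdown X k (layer k X - L0)"
    unfolding Cdown_def
  proof (intro allI impI)
    fix j N assume N: "N \<subseteq> layer k X" "card N = card (layer k X - L0)"
    have M0: "layer k X - L0 \<subseteq> layer k X" by auto
    consider "k < j" | "j = k" | "j < k" by linarith
    then show "card (downsh j (layer k X - L0)) \<le> card (downsh j N)"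
    proof cases
      case 1
      then show ?thesis using downsh_empty[OF fX M0] by simp
    next
      case 2
      then show ?thesis using downsh_self[OF fX M0] downsh_self[OF fX N(1)] N(2) by simp
    next
      case 3
      show ?thesis
      proof (cases "k = n")
        case True
        then have "layer k X \<subseteq> {X}" using layer_top[OF fX] cX by simp
        then have "N = layer k X - L0" using single_eq[of N X "layer k X - L0"] N by blast
        then show ?thesis by simp
      next
        case False
        then have kn: "k < n" using k by simp
        define s where "s = k - j"
        have s: "s > 0" using 3 unfolding s_def by auto
        have "nbhd_minimal n s (cube n - A0)" using ext s unfolding extremal_def by blast
        moreover have "Above n k \<union> N \<subseteq> cube n" using N unfolding Above_def layer_def cube_def X_def by auto
        moreover have "card (Above n k \<union> N) = card (cube n - A0)"
          using cAF[OF N(1)] cAF[OF M0] cubeA N(2) by simp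
        ultimately have le: "card (nbhd n s (cube n - A0)) \<le> card (nbhd n s (Above n k \<union> N))"
          unfolding nbhd_minimal_def by blast
        have cN: "card (nbhd n s (Above n k \<union> F)) = card (Above n j) + card (downsh j F)"
          if "F \<subseteq> layer k X" for F
        proof -
          have "nbhd n s (Above n k \<union> F) = Above n j \<union> downsh j F"
            using NA[OF kn 3, of F] that unfolding X_def s_def by simp
          moreover have "Above n j \<inter> downsh j F = {}" unfolding Above_def downsh_def by auto
          moreover have "F \<subseteq> Pow X" using that unfolding layer_def by auto
          ultimately show ?thesis using card_Un_disjoint[OF fA finite_downsh[OF fX]] by simp
        qed
        show ?thesis using le cN[OF M0] cN[OF N(1)] cubeA by simp
      qed
    qed
  qed
  obtain s0 where s0: "bij_betw s0 X X" "lexdc X k ((\<lambda>x. s0 ` x) ` L0)"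
    using main_rec[OF fX fX refl L0sub cu cd] by blast
  define p where "p = (\<lambda>x. if x \<in> X then s0 x else x)"
  have bp: "bij_betw p X X" using s0(1) unfolding p_def by (subst bij_betw_cong) auto
  have pp: "p permutes X" using bp by (rule bij_imp_permutes) (simp add: p_def)
  have im1: "(\<lambda>x. p ` x) ` L0 = (\<lambda>x. s0 ` x) ` L0"
  proof (rule image_cong[OF refl])
    fix x assume "x \<in> L0"
    then have "x \<subseteq> X" using L0sub unfolding layer_def by auto
    then show "p ` x = s0 ` x" unfolding p_def by (intro image_cong) auto
  qed
  have im2: "(\<lambda>x. p ` x) ` Below n k = Below n k"
  proof -
    have "Below n k = {x. x \<subseteq> X \<and> card (p ` x) < k}"
      using bij_card_sub[OF bp] unfolding Below_def cube_def X_def by auto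
    then show ?thesis using bij_image_sets[OF bp, of "\<lambda>y. card y < k"]
      unfolding Below_def cube_def X_def by auto
  qed
  have "(\<lambda>x. p ` x) ` A0 = Below n k \<union> (\<lambda>x. s0 ` x) ` L0"
    using A0eq im1 im2 by (simp add: image_Un)
  moreover have "sim_initial_segment n (Below n k \<union> (\<lambda>x. s0 ` x) ` L0)"
    using sim_init s0(2) unfolding X_def by blast
  ultimately show ?thesis using pp unfolding X_def by auto
qed



lemma tau_inv: "symdiff (symdiff x t) t = x"
  unfolding symdiff_def by auto

lemma tau_cube: "t \<in> cube n \<Longrightarrow> x \<in> cube n \<Longrightarrow> symdiff x t \<in> cube n"
  unfolding symdiff_def cube_def by auto

lemma hdist_tau: "hdist (symdiff x t) (symdiff y t) = hdist x y"
proof -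
  have "symdiff (symdiff x t) (symdiff y t) = symdiff x y" unfolding symdiff_def by auto
  then show ?thesis unfolding hdist_def by simp
qed

lemma hdist_t: "hdist t (symdiff y t) = card y"
proof -
  have "symdiff t (symdiff y t) = y" unfolding symdiff_def by auto
  then show ?thesis unfolding hdist_def by simp
qed

lemma inj_tau: "inj (\<lambda>x. symdiff x t)"
  by (rule inj_on_inverseI[where g = "\<lambda>x. symdiff x t"]) (rule tau_inv)

lemma nbhd_tau:
  assumes t: "t \<in> cube n"
  shows "nbhd n s ((\<lambda>x. symdiff x t) ` B) = (\<lambda>x. symdiff x t) ` nbhd n s B"
proof (intro equalityI subsetI)
  fix y assume "y \<in> nbhd n s ((\<lambda>x. symdiff x t) ` B)"
  then obtain x where y: "y \<in> cube n" "x \<in> B" "hdist y (symdiff x t) \<le> s" unfolding nbhd_def by auto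
  have "hdist (symdiff y t) x \<le> s" using y hdist_tau[of y t "symdiff x t"] tau_inv[of x t] by simp
  then have "symdiff y t \<in> nbhd n s B" using y tau_cube[OF t] unfolding nbhd_def by auto
  then show "y \<in> (\<lambda>x. symdiff x t) ` nbhd n s B" using tau_inv[of y t] by (metis image_eqI)
next
  fix y assume "y \<in> (\<lambda>x. symdiff x t) ` nbhd n s B"
  then obtain z x where y: "y = symdiff z t" "z \<in> cube n" "x \<in> B" "hdist z x \<le> s" unfolding nbhd_def by auto
  have "hdist y (symdiff x t) \<le> s" using y hdist_tau[of z t x] by simp
  then show "y \<in> nbhd n s ((\<lambda>x. symdiff x t) ` B)" using y tau_cube[OF t] unfolding nbhd_def by auto
qed

lemma tau_image_cube: "t \<in> cube n \<Longrightarrow> (\<lambda>x. symdiff x t) ` cube n = cube n"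
proof (intro equalityI subsetI)
  fix y assume "t \<in> cube n" "y \<in> (\<lambda>x. symdiff x t) ` cube n"
  then show "y \<in> cube n" using tau_cube by blast
next
  fix y assume t: "t \<in> cube n" and "y \<in> cube n"
  then have "symdiff y t \<in> cube n" using tau_cube by blast
  then show "y \<in> (\<lambda>x. symdiff x t) ` cube n" using tau_inv[of y t] by (metis image_eqI)
qed

lemma minimal_tau:
  assumes t: "t \<in> cube n" and m: "nbhd_minimal n s B"
  shows "nbhd_minimal n s ((\<lambda>x. symdiff x t) ` B)"
  unfolding nbhd_minimal_def
proof (intro allI impI)
  let ?f = "\<lambda>x. symdiff x t"
  fix C assume C: "C \<subseteq> cube n" "card C = card (?f ` B)"
  have ci: "card (?f ` D) = card D" for D using inj_tau[of t] by (simp add: card_image inj_on_subset)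
  have ff: "?f ` ?f ` D = D" for D using tau_inv[of _ t] by (simp add: image_image)
  have "?f ` C \<subseteq> cube n" using C(1) tau_cube[OF t] by blast
  moreover have "card (?f ` C) = card B" using C(2) ci by simp
  ultimately have "card (nbhd n s B) \<le> card (nbhd n s (?f ` C))" using m unfolding nbhd_minimal_def by blast
  then show "card (nbhd n s (?f ` B)) \<le> card (nbhd n s C)"
    using nbhd_tau[OF t, of s B] nbhd_tau[OF t, of s "?f ` C"] ci ff by simp
qed

lemma extremal_tau:
  assumes e: "extremal n A" and t: "t \<in> cube n"
  shows "extremal n ((\<lambda>x. symdiff x t) ` A)"
proof -
  let ?f = "\<lambda>x. symdiff x t"
  have A: "A \<subseteq> cube n" using e unfolding extremal_def by blast
  have "?f ` A \<subseteq> cube n" using A tau_cube[OF t] by blast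
  moreover have "cube n - ?f ` A = ?f ` (cube n - A)"
    using image_set_diff[OF inj_tau[of t], of "cube n" A] tau_image_cube[OF t] by simp
  ultimately show ?thesis using e minimal_tau[OF t] unfolding extremal_def by auto
qed

lemma image_symdiff: "inj p \<Longrightarrow> p ` (symdiff x t) = symdiff (p ` x) (p ` t)"
  unfolding symdiff_def by (simp add: image_Un image_set_diff)

theorem proposition6:
  fixes n :: nat and A :: "nat set set" and t :: "nat set" and r :: int
  assumes "extremal n A"
    and "t \<in> cube n"
    and "hball n t r \<subseteq> A" and "A \<subseteq> hball n t (r + 1)"
  shows "\<exists>S. sim_initial_segment n S \<and> cube_isomorphic n A S"
proof -
  note ext = assms(1) and t = assms(2) and sw1 = assms(3) and sw2 = assms(4)
  have Ac: "A \<subseteq> cube n" using ext unfolding extremal_def by blast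
  have hd_le: "hdist t y \<le> n" if "y \<in> cube n" for y
  proof -
    have "symdiff t y \<subseteq> {1..n}" using t that unfolding symdiff_def cube_def by auto
    then show ?thesis unfolding hdist_def using card_mono[of "{1..n}"] by fastforce
  qed
  consider (neg) "r + 1 \<le> 0" | (big) "r \<ge> int n" | (mid) "0 \<le> r" "r < int n" by linarith
  then show ?thesis
  proof cases
    case neg
    have At: "A \<subseteq> {t}"
    proof
      fix y assume "y \<in> A"
      then have y: "y \<in> cube n" "int (hdist t y) \<le> r + 1" using sw2 unfolding hball_def by auto
      then have "hdist t y = 0" using neg by linarith
      moreover have "finite (symdiff t y)" using y t cube_finite unfolding symdiff_def by blast
      ultimately have "symdiff t y = {}" unfolding hdist_def by simp
      then show "y \<in> {t}" unfolding symdiff_def by auto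
    qed
    define S where "S = (\<lambda>x. symdiff x t) ` A"
    have S0: "S \<subseteq> {{}}" using At unfolding S_def symdiff_def by auto
    have "sim_initial_segment n S"
      unfolding sim_initial_segment_def
    proof (intro conjI ballI impI)
      show "S \<subseteq> cube n" using S0 unfolding cube_def by auto
    next
      fix x y assume "x \<in> S" "y \<in> cube n" "sim_less y x"
      then have "x = {}" "finite y" using S0 cube_finite by auto
      then show "y \<in> S" using \<open>sim_less y x\<close> unfolding sim_less_def lex_less_def by auto
    qed
    moreover have "cube_aut n (\<lambda>x. symdiff (id ` x) t)"
      unfolding cube_aut_def using t by (intro exI[of _ id] exI[of _ t] conjI) (auto simp: cube_def permutes_id)
    moreover have "(\<lambda>x. symdiff (id ` x) t) ` A = S" unfolding S_def by simp
    ultimately have "cube_isomorphic n A S" unfolding cube_isomorphic_def by blast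
    moreover note \<open>sim_initial_segment n S\<close>
    ultimately show ?thesis by blast
  next
    case big
    have "cube n \<subseteq> hball n t r" using hd_le big unfolding hball_def by force
    then have AA: "A = cube n" using Ac sw1 by blast
    have "sim_initial_segment n (cube n)" unfolding sim_initial_segment_def by auto
    moreover have "cube_aut n (\<lambda>x. symdiff (id ` x) {})"
      unfolding cube_aut_def by (intro exI[of _ id] exI[of _ "{}"] conjI) (auto simp: permutes_id)
    moreover have "(\<lambda>x. symdiff (id ` x) {}) ` A = cube n" unfolding AA symdiff_def by simp
    ultimately have "cube_isomorphic n A (cube n)" unfolding cube_isomorphic_def by blast
    moreover note \<open>sim_initial_segment n (cube n)\<close>
    ultimately show ?thesis by blast
  next
    case mid
    define k where "k = nat (r + 1)"
    have k: "1 \<le> k" "k \<le> n" "int k = r + 1" using mid unfolding k_def by auto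
    let ?f = "\<lambda>x. symdiff x t"
    define A0 where "A0 = ?f ` A"
    have e0: "extremal n A0" unfolding A0_def using extremal_tau[OF ext t] .
    have b1: "Below n k \<subseteq> A0"
    proof
      fix y assume "y \<in> Below n k"
      then have y: "y \<in> cube n" "card y < k" unfolding Below_def by auto
      have "int (hdist t (?f y)) \<le> r" using y(2) k(3) hdist_t[of t y] by simp
      then have "?f y \<in> hball n t r" using tau_cube[OF t y(1)] unfolding hball_def by simp
      then have "?f y \<in> A" using sw1 by blast
      then show "y \<in> A0" unfolding A0_def using tau_inv[of y t] by (metis image_eqI)
    qed
    have b2: "A0 \<subseteq> Below n (Suc k)"
    proof
      fix y assume "y \<in> A0"
      then obtain x where x: "x \<in> A" "y = ?f x" unfolding A0_def by blast
      then have "x \<in> cube n" "int (hdist t x) \<le> r + 1" using sw2 unfolding hball_def by auto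
      moreover have "hdist t x = card y" using hdist_t[of t y] x tau_inv[of x t] by simp
      ultimately have "card y < Suc k" using k(3) by simp
      moreover have "y \<in> cube n" using x(2) tau_cube[OF t \<open>x \<in> cube n\<close>] by simp
      ultimately show "y \<in> Below n (Suc k)" unfolding Below_def by simp
    qed
    obtain p where p: "p permutes {1..n}" "sim_initial_segment n ((\<lambda>x. p ` x) ` A0)"
      using core[OF e0 k(1,2) b1 b2] by blast
    have ip: "inj p" using p(1) by (rule permutes_inj)
    have "(\<lambda>x. symdiff (p ` x) (p ` t)) ` A = (\<lambda>x. p ` x) ` A0"
      unfolding A0_def image_image using image_symdiff[OF ip] by simp
    moreover have "p ` t \<subseteq> {1..n}" using t permutes_image[OF p(1)] unfolding cube_def by auto
    moreover have "cube_aut n (\<lambda>x. symdiff (p ` x) (p ` t))"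
      unfolding cube_aut_def using p(1) \<open>p ` t \<subseteq> {1..n}\<close>
      by (intro exI[of _ p] exI[of _ "p ` t"] conjI) auto
    ultimately have "cube_isomorphic n A ((\<lambda>x. p ` x) ` A0)"
      unfolding cube_isomorphic_def by blast
    then show ?thesis using p(2) by blast
  qed
qed


end
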